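(* Let $\theta\in\mathbb R\setminus\mathbb Q$. Then the cyclic cohomology of $\mathcal A_\theta^{alg}$ with coefficients in the twisted dual satisfies $HC^1(\mathcal A_\theta^{alg},{}_{-1}\mathcal A_\theta^{alg*})=0$ and $HC^2(\mathcal A_\theta^{alg},{}_{-1}\mathcal A_\theta^{alg*})\cong\mathbb C^4$.
   Context: Let $\lambda=e^{2\pi i\theta}$. $\mathcal A_\theta^{alg}$ is the complex algebra of finite linear combinations $\sum x_{n,m}U_1^nU_2^m$ generated by invertible $U_1,U_2$ with $U_2U_1=\lambda U_1U_2$. Its linear dual $\mathcal A_\theta^{alg*}$ is the space of formal series $\sum\varphi_{n,m}U_1^nU_2^m$. $\sigma$ is the automorphism $\sigma(U_j)=U_j^{-1}$, and ${}_{-1}\mathcal A_\theta^{alg*}$ is $\mathcal A_\theta^{alg*}$ with bimodule structure $\alpha\cdot a=\sigma(\alpha)a$, $a\cdot\alpha=a\alpha$. $HC^\bullet(\mathcal A_\theta^{alg},{}_{-1}\mathcal A_\theta^{alg*})$ denotes the $\sigma$-twisted cyclic cohomology, i.e. the cyclic cohomology fitting into Connes' $S,B,I$ long exact sequence with the Hochschild cohomology $H^\bullet(\mathcal A_\theta^{alg},{}_{-1}\mathcal A_\theta^{alg*})$. *)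

theory Defs
  imports Complex_Main
begin

text \<open>Monomials U_1^n U_2^m of the algebraic noncommutative torus are indexed by (n,m).
  Since the monomials form a basis, a multilinear functional on (A_theta^alg)^(k+1)
  is the same as an arbitrary function on (k+1)-tuples (lists) of monomial indices.\<close>

type_synonym mono = "int \<times> int"
type_synonym cochain = "mono list \<Rightarrow> complex"

definition padd :: "mono \<Rightarrow> mono \<Rightarrow> mono" where
  "padd x y = (fst x + fst y, snd x + snd y)"

definition pneg :: "mono \<Rightarrow> mono" where
  "pneg x = (- fst x, - snd x)"

text \<open>Structure constants: U^x U^y = omega x y U^(x+y), with lambda = exp(2 pi i theta),
  since U_2^m U_1^p = lambda^(m p) U_1^p U_2^m.  The automorphism sigma sends U^x to U^(-x).\<close>
definition omega :: "real \<Rightarrow> mono \<Rightarrow> mono \<Rightarrow> complex" where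
  "omega \<theta> x y = exp (2 * of_real pi * \<i> * of_real \<theta> * of_int (snd x * fst y))"

text \<open>sigma-twisted Hochschild coboundary on n-cochains (functionals of n+1 arguments):
  (b phi)(a0,...,a(n+1)) = sum_{i=0}^n (-1)^i phi(..., a_i a_(i+1), ...)
                          + (-1)^(n+1) phi(sigma(a_(n+1)) a0, a1, ..., an).\<close>
definition tw_b :: "real \<Rightarrow> nat \<Rightarrow> cochain \<Rightarrow> cochain" where
  "tw_b \<theta> n \<psi> xs = (if length xs = n + 2 then
     (\<Sum>i\<le>n. (-1)^i * omega \<theta> (xs ! i) (xs ! Suc i)
          * \<psi> (take i xs @ [padd (xs ! i) (xs ! Suc i)] @ drop (i + 2) xs))
     + (-1)^(n + 1) * omega \<theta> (pneg (xs ! (n + 1))) (xs ! 0)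
          * \<psi> (padd (pneg (xs ! (n + 1))) (xs ! 0) # take n (tl xs))
   else 0)"

definition tw_lambda :: "nat \<Rightarrow> cochain \<Rightarrow> cochain" where
  "tw_lambda n \<psi> xs = (-1)^n * \<psi> (pneg (last xs) # butlast xs)"

definition cochains :: "nat \<Rightarrow> cochain set" where
  "cochains n = {\<psi>. \<forall>xs. length xs \<noteq> n + 1 \<longrightarrow> \<psi> xs = 0}"

definition cyc_cochains :: "nat \<Rightarrow> cochain set" where
  "cyc_cochains n = {\<psi> \<in> cochains n. \<forall>xs. length xs = n + 1 \<longrightarrow> tw_lambda n \<psi> xs = \<psi> xs}"

definition cyc_cocycles :: "real \<Rightarrow> nat \<Rightarrow> cochain set" where
  "cyc_cocycles \<theta> n = {\<psi> \<in> cyc_cochains n. tw_b \<theta> n \<psi> = (\<lambda>_. 0)}"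

definition cyc_coboundaries :: "real \<Rightarrow> nat \<Rightarrow> cochain set" where
  "cyc_coboundaries \<theta> n = (if n = 0 then {\<lambda>_. 0} else tw_b \<theta> (n - 1) ` cyc_cochains (n - 1))"

definition HC_zero :: "real \<Rightarrow> nat \<Rightarrow> bool" where
  "HC_zero \<theta> n \<longleftrightarrow> cyc_cocycles \<theta> n \<subseteq> cyc_coboundaries \<theta> n"

definition HC_dim :: "real \<Rightarrow> nat \<Rightarrow> nat \<Rightarrow> bool" where
  "HC_dim \<theta> n d \<longleftrightarrow> (\<exists>z :: nat \<Rightarrow> cochain.
     (\<forall>i<d. z i \<in> cyc_cocycles \<theta> n)
   \<and> (\<forall>\<psi>\<in>cyc_cocycles \<theta> n. \<exists>c :: nat \<Rightarrow> complex.
        (\<lambda>xs. \<psi> xs - (\<Sum>i<d. c i * z i xs)) \<in> cyc_coboundaries \<theta> n)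
   \<and> (\<forall>c :: nat \<Rightarrow> complex. (\<lambda>xs. \<Sum>i<d. c i * z i xs) \<in> cyc_coboundaries \<theta> n
        \<longrightarrow> (\<forall>i<d. c i = 0)))"

end

theory Submission
  imports Defs "HOL-Library.Product_Plus"
begin


lemma padd_eq[simp]: "padd x y = x + y" by (cases x; cases y) (simp add: padd_def)
lemma pneg_eq[simp]: "pneg x = - x" by (cases x) (simp add: pneg_def)

fun S :: "mono list \<Rightarrow> mono" where
  "S [] = 0" | "S (x # xs) = x + S xs"

fun e :: "mono list \<Rightarrow> int" where
  "e [] = 0"
| "e (x # xs) = fst x * snd x + fst x * snd (S xs) - snd x * fst (S xs) + e xs"

definition c0 :: "real \<Rightarrow> complex" where "c0 \<theta> = of_real pi * \<i> * of_real \<theta>"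

definition Q :: "real \<Rightarrow> mono list \<Rightarrow> complex" where
  "Q \<theta> xs = exp (of_int (e xs) * c0 \<theta>)"

lemma Q_ne[simp]: "Q \<theta> xs \<noteq> 0" by (simp add: Q_def)

lemma omega_eq: "omega \<theta> x y = exp (of_int (2 * snd x * fst y) * c0 \<theta>)"
  by (simp add: omega_def c0_def mult_ac)

lemma exp_comb: fixes c :: complex assumes h: "A + B = C" shows "exp (of_int A * c) * exp (of_int B * c) = exp (of_int C * c)"
  unfolding h[symmetric] of_int_add distrib_right by (rule exp_add[symmetric])

lemma ph: "e xs + 2 * snd x * fst y = e ys \<Longrightarrow> Q \<theta> xs * omega \<theta> x y = Q \<theta> ys"
  unfolding Q_def omega_eq by (rule exp_comb)

lemma Qeq: "e xs = e ys \<Longrightarrow> Q \<theta> xs = Q \<theta> ys" by (simp add: Q_def)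

lemma tb0: "tw_b \<theta> 0 f [x,y] = omega \<theta> x y * f [x+y] - omega \<theta> (-y) x * f [x-y]"
  by (simp add: tw_b_def)
lemma tb1: "tw_b \<theta> 1 f [a,b,c] = omega \<theta> a b * f [a+b,c] - omega \<theta> b c * f [a,b+c]
    + omega \<theta> (-c) a * f [a-c,b]"
  by (simp add: tw_b_def)
lemma tb2: "tw_b \<theta> 2 f [a,b,c,d] = omega \<theta> a b * f [a+b,c,d] - omega \<theta> b c * f [a,b+c,d]
    + omega \<theta> c d * f [a,b,c+d] - omega \<theta> (-d) a * f [a-d,b,c]"
  by (simp add: tw_b_def numeral_2_eq_2)

lemma T0: "Q \<theta> [x,y] * tw_b \<theta> 0 f [x,y] = Q \<theta> [x+y] * f [x+y] - Q \<theta> [x-y] * f[x-y]"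
proof -
  have 1: "Q \<theta> [x,y] * omega \<theta> x y = Q \<theta> [x+y]" by (rule ph) (simp add: algebra_simps)
  have 2: "Q \<theta> [x,y] * omega \<theta> (-y) x = Q \<theta> [x-y]" by (rule ph) (simp add: algebra_simps)
  show ?thesis unfolding tb0 by (simp add: right_diff_distrib 1[symmetric] 2[symmetric] mult_ac)
qed

lemma T1: "Q \<theta> [a,b,c] * tw_b \<theta> 1 f [a,b,c] = Q \<theta> [a+b,c] * f [a+b,c] - Q \<theta> [a,b+c] * f [a,b+c]
    + Q \<theta> [a-c,b] * f [a-c,b]"
proof -
  have 1: "Q \<theta> [a,b,c] * omega \<theta> a b = Q \<theta> [a+b,c]" by (rule ph) (simp add: algebra_simps)
  have 2: "Q \<theta> [a,b,c] * omega \<theta> b c = Q \<theta> [a,b+c]" by (rule ph) (simp add: algebra_simps)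
  have 3: "Q \<theta> [a,b,c] * omega \<theta> (-c) a = Q \<theta> [a-c,b]" by (rule ph) (simp add: algebra_simps)
  show ?thesis unfolding tb1 by (simp add: distrib_left right_diff_distrib 1[symmetric] 2[symmetric] 3[symmetric] mult_ac)
qed

lemma T2: "Q \<theta> [a,b,c,d] * tw_b \<theta> 2 f [a,b,c,d] = Q \<theta> [a+b,c,d] * f [a+b,c,d] - Q \<theta> [a,b+c,d] * f [a,b+c,d]
    + Q \<theta> [a,b,c+d] * f [a,b,c+d] - Q \<theta> [a-d,b,c] * f [a-d,b,c]"
proof -
  have 1: "Q \<theta> [a,b,c,d] * omega \<theta> a b = Q \<theta> [a+b,c,d]" by (rule ph) (simp add: algebra_simps)
  have 2: "Q \<theta> [a,b,c,d] * omega \<theta> b c = Q \<theta> [a,b+c,d]" by (rule ph) (simp add: algebra_simps)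
  have 3: "Q \<theta> [a,b,c,d] * omega \<theta> c d = Q \<theta> [a,b,c+d]" by (rule ph) (simp add: algebra_simps)
  have 4: "Q \<theta> [a,b,c,d] * omega \<theta> (-d) a = Q \<theta> [a-d,b,c]" by (rule ph) (simp add: algebra_simps)
  show ?thesis unfolding tb2 by (simp add: distrib_left right_diff_distrib 1[symmetric] 2[symmetric] 3[symmetric] 4[symmetric] mult_ac)
qed

lemma L0: "tw_lambda 0 f [x] = f [-x]" by (simp add: tw_lambda_def)
lemma L1: "tw_lambda 1 f [a,b] = - f [-b,a]" by (simp add: tw_lambda_def)
lemma L2: "tw_lambda 2 f [a,b,c] = f [-c,a,b]" by (simp add: tw_lambda_def)
lemma QL0: "Q \<theta> [-x] = Q \<theta> [x]" by (rule Qeq) (simp add: algebra_simps)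
lemma QL1: "Q \<theta> [-b,a] = Q \<theta> [a,b]" by (rule Qeq) (simp add: algebra_simps)
lemma QL2: "Q \<theta> [-c,a,b] = Q \<theta> [a,b,c]" by (rule Qeq) (simp add: algebra_simps)


section \<open>Abstract simplicial algebra\<close>

definition vc :: "('a \<Rightarrow> 'a \<Rightarrow> 'a \<Rightarrow> complex) \<Rightarrow> ('a \<Rightarrow> 'a) \<Rightarrow> 'a \<Rightarrow> complex" where
  "vc G N z = (3 * G z z z + G z (N z) z) / 4"
definition vg :: "('a \<Rightarrow> 'a \<Rightarrow> 'a \<Rightarrow> complex) \<Rightarrow> ('a \<Rightarrow> 'a) \<Rightarrow> 'a \<Rightarrow> 'a \<Rightarrow> complex" where
  "vg G N z k = (G k (N z) z + G z z z) / 2 - vc G N z"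
definition vpsi :: "('a \<Rightarrow> 'a \<Rightarrow> 'a \<Rightarrow> complex) \<Rightarrow> ('a \<Rightarrow> 'a) \<Rightarrow> 'a \<Rightarrow> 'a \<Rightarrow> 'a \<Rightarrow> complex" where
  "vpsi G N z k1 k2 = G k1 k2 z - vc G N z - vg G N z k1 + vg G N z k2"

lemma valg:
  fixes G :: "'a \<Rightarrow> 'a \<Rightarrow> 'a \<Rightarrow> complex"
  assumes cyc: "\<And>x y w. G x y w = G y w (N x)" and NN: "\<And>x. N (N x) = x"
    and coc: "\<And>x y w t. G x y w - G x y t + G x w t - G y w t = 0"
  shows "vpsi G N z k1 k2 = - vpsi G N z k2 (N k1)"
    and "vpsi G N z k0 k1 - vpsi G N z k0 k2 + vpsi G N z k1 k2 = G k0 k1 k2 - vc G N z"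
proof -
  have d1: "G k z z = G z z z" for k using coc[of k z z z] by simp
  have A: "G k1 k2 z + G k2 (N k1) z = G k1 (N z) z + G z z z"
  proof -
    have o: "G k2 (N k1) z = G k1 (N z) k2"
      using cyc[of k2 "N k1" z] cyc[of "N k1" z "N k2"] cyc[of z "N k2" k1] cyc[of "N k2" k1 "N z"]
        cyc[of k1 "N z" k2] NN by metis
    have "G (N z) k2 z = G z z z" using cyc[of "N z" k2 z] NN d1 by metis
    then show ?thesis using o coc[of k1 "N z" k2 z] by (simp add: algebra_simps)
  qed
  have a4: "G k (N z) z + G (N k) (N z) z = G z z z + G z (N z) z" for k
  proof -
    have o: "G (N k) (N z) z = G k z (N z)"
      using cyc[of "N k" "N z" z] cyc[of "N z" z k] cyc[of z k z] NN by metis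
    show ?thesis using o coc[of k z "N z" z] d1[of k] by (simp add: algebra_simps)
  qed
  show "vpsi G N z k1 k2 = - vpsi G N z k2 (N k1)"
  proof -
    have A': "G k1 k2 z = G k1 (N z) z + G z z z - G k2 (N k1) z" using A by (simp add: algebra_simps)
    have B': "G (N k1) (N z) z = G z z z + G z (N z) z - G k1 (N z) z" using a4[of k1] by (simp add: algebra_simps)
    show ?thesis unfolding vpsi_def vg_def vc_def A' B' by (simp add: field_simps)
  qed
  show "vpsi G N z k0 k1 - vpsi G N z k0 k2 + vpsi G N z k1 k2 = G k0 k1 k2 - vc G N z"
    using coc[of k0 k1 k2 z] unfolding vpsi_def by (simp add: algebra_simps)
qed

section \<open>Parity decomposition\<close>

definition pdiv2 :: "mono \<Rightarrow> mono" where "pdiv2 u = (fst u div 2, snd u div 2)"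
definition pmod2 :: "mono \<Rightarrow> mono" where "pmod2 u = (fst u mod 2, snd u mod 2)"

lemma dec: "u = pmod2 u + pdiv2 u + pdiv2 u"
  by (cases u) (simp add: pdiv2_def pmod2_def)

lemma shift_mod: "pmod2 (u - (c + c)) = pmod2 u"
  by (cases u; cases c) (simp add: pmod2_def, presburger)
lemma shift_div: "pdiv2 (u - (c + c)) = pdiv2 u - c"
  by (cases u; cases c) (simp add: pdiv2_def, presburger)

lemma pmod2_cases: "pmod2 u \<in> {(0,0),(0,1),(1,0),(1,1)}"
proof -
  have "fst u mod 2 = 0 \<or> fst u mod 2 = 1" "snd u mod 2 = 0 \<or> snd u mod 2 = 1" by presburger+
  then show ?thesis by (auto simp: pmod2_def)
qed


lemma grp1: fixes m k p q :: "'a::ab_group_add" assumes "p + q = m + k + k" shows "k - q - p = - m - k"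
proof -
  have "p = m + k + k - q" using assms by (simp add: eq_diff_eq)
  then show ?thesis by (simp add: algebra_simps)
qed
lemma grp2: fixes m k a b c :: "'a::ab_group_add" assumes "a + b + c = m + k + k" shows "m + k + (k - (b + c)) = a"
proof -
  have "a = m + k + k - b - c" using assms by (simp add: algebra_simps eq_diff_eq)
  then show ?thesis by (simp add: algebra_simps)
qed

lemma hc1_tilde:
  fixes f :: "mono list \<Rightarrow> complex"
  assumes cyc: "\<And>p q. f [p,q] = - f [-q,p]"
    and coc: "\<And>a b c. f [a+b,c] - f [a,b+c] + f [a-c,b] = 0"
  shows "f [x+y - pdiv2 (x+y), pdiv2 (x+y)] - f [x-y - pdiv2 (x-y), pdiv2 (x-y)] = f [x,y]"
    and "f [-x - pdiv2 (-x), pdiv2 (-x)] = f [x - pdiv2 x, pdiv2 x]"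
proof -
  have f0: "f [a,0] = 0" for a using coc[of a 0 0] by simp
  have anti: "f [p,-q] = - f [p,q]" for p q
  proof -
    have "f [p-q+q, -q] - f [p-q, q + -q] + f [p-q - -q, q] = 0" using coc[of "p-q" q "-q"] .
    then have "f [p,q] + f [p,-q] = 0" using f0 by (simp add: algebra_simps)
    then show ?thesis by (simp add: eq_neg_iff_add_eq_0 add.commute)
  qed
  let ?h = "pdiv2 (x+y)"
  have hd: "pdiv2 (x-y) = ?h - y" using shift_div[of "x+y" y] by (simp add: algebra_simps)
  have c1: "f [x + (y - ?h), ?h] - f [x, y - ?h + ?h] + f [x - ?h, y - ?h] = 0" using coc[of x "y-?h" ?h] .
  have c2: "f [x - ?h, y - ?h] = - f [x - ?h, ?h - y]" using anti[of "x - ?h" "?h - y"] by simp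
  show "f [x+y - pdiv2 (x+y), pdiv2 (x+y)] - f [x-y - pdiv2 (x-y), pdiv2 (x-y)] = f [x,y]"
    unfolding hd using c1 c2 by (simp add: algebra_simps)
  let ?g = "pdiv2 x"
  have gd: "pdiv2 (-x) = ?g - x" using shift_div[of x x] by (simp add: algebra_simps)
  have e1: "f [x - ?g, ?g] = - f [-?g, x - ?g]" using cyc[of "x - ?g" ?g] by simp
  have e2: "f [-?g, ?g - x] = - f [-?g, x - ?g]" using anti[of "-?g" "x - ?g"] by simp
  show "f [-x - pdiv2 (-x), pdiv2 (-x)] = f [x - pdiv2 x, pdiv2 x]"
    unfolding gd e1 using e2 by (simp add: algebra_simps)
qed

definition Gr :: "(mono list \<Rightarrow> complex) \<Rightarrow> mono \<Rightarrow> mono \<Rightarrow> mono \<Rightarrow> mono \<Rightarrow> complex" where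
  "Gr P r k1 k2 k3 = P [r+k1+k3, k2-k3, k1-k2]"
definition Nr :: "mono \<Rightarrow> mono \<Rightarrow> mono" where "Nr r k = -r - k"

definition psit :: "(mono list \<Rightarrow> complex) \<Rightarrow> mono \<Rightarrow> mono \<Rightarrow> complex" where
  "psit P p q = vpsi (Gr P (pmod2 (p+q))) (Nr (pmod2 (p+q))) 0 (pdiv2 (p+q)) (pdiv2 (p+q) - q)"

lemma Gr_props:
  assumes cyc: "\<And>a b c. P [a,b,c] = P [-c,a,b]"
    and coc: "\<And>a b c d. P [a+b,c,d] - P [a,b+c,d] + P [a,b,c+d] - P [a-d,b,c] = 0"
  shows "\<And>x y w. Gr P r x y w = Gr P r y w (Nr r x)" "\<And>x. Nr r (Nr r x) = x"
    "\<And>x y w t. Gr P r x y w - Gr P r x y t + Gr P r x w t - Gr P r y w t = 0"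
proof -
  fix x y w t
  show "Gr P r x y w = Gr P r y w (Nr r x)"
    using cyc[of "r+x+w" "y-w" "x-y"] unfolding Gr_def Nr_def by (simp add: algebra_simps)
  show "Nr r (Nr r x) = x" by (simp add: Nr_def)
  show "Gr P r x y w - Gr P r x y t + Gr P r x w t - Gr P r y w t = 0"
    using coc[of "r+x+t" "w-t" "y-w" "x-y"] unfolding Gr_def by (simp add: algebra_simps)
qed

lemma hc2_tilde:
  assumes cyc: "\<And>a b c. P [a,b,c] = P [-c,a,b]"
    and coc: "\<And>a b c d. P [a+b,c,d] - P [a,b+c,d] + P [a,b,c+d] - P [a-d,b,c] = 0"
  shows "psit P p q = - psit P (-q) p"
    and "psit P (a+b) c - psit P a (b+c) + psit P (a-c) b
          = P [a,b,c] - vc (Gr P (pmod2 (a+b+c))) (Nr (pmod2 (a+b+c))) 0"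
proof -
  note GP = Gr_props[OF cyc coc]
  have V1: "vpsi (Gr P r) (Nr r) z k1 k2 = - vpsi (Gr P r) (Nr r) z k2 (Nr r k1)" for r z k1 k2
    using valg(1)[of "Gr P r" "Nr r", OF GP(1) GP(2) GP(3)] .
  have V2: "vpsi (Gr P r) (Nr r) z k0 k1 - vpsi (Gr P r) (Nr r) z k0 k2 + vpsi (Gr P r) (Nr r) z k1 k2
     = Gr P r k0 k1 k2 - vc (Gr P r) (Nr r) z" for r z k0 k1 k2
    using valg(2)[of "Gr P r" "Nr r", OF GP(1) GP(2) GP(3)] .
  let ?u = "p+q" let ?m = "pmod2 ?u" let ?k = "pdiv2 ?u"
  have s: "-q + p = ?u - (q+q)" by (simp add: algebra_simps)
  have dq: "?u = ?m + ?k + ?k" by (rule dec)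
  have n: "?k - q - p = Nr ?m ?k" unfolding Nr_def
    by (rule grp1[OF dq])
  show "psit P p q = - psit P (-q) p"
    unfolding psit_def s shift_mod shift_div n by (rule V1)
  let ?v = "a+b+c" let ?M = "pmod2 ?v" let ?K = "pdiv2 ?v"
  have s1: "a + (b+c) = ?v" by (simp add: algebra_simps)
  have s2: "a - c + b = ?v - (c+c)" by (simp add: algebra_simps)
  have k2: "?K - c - b = ?K - (b+c)" by (simp add: algebra_simps)
  have dv: "?v = ?M + ?K + ?K" by (rule dec)
  have G: "Gr P ?M ?K (?K - c) (?K - (b+c)) = P [a,b,c]"
  proof -
    have "?M + ?K + (?K - (b+c)) = a" by (rule grp2[OF dv])
    moreover have "?K - c - (?K - (b+c)) = b" by (simp add: algebra_simps)
    moreover have "?K - (?K - c) = c" by simp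
    ultimately show ?thesis unfolding Gr_def by simp
  qed
  show "psit P (a+b) c - psit P a (b+c) + psit P (a-c) b
          = P [a,b,c] - vc (Gr P (pmod2 (a+b+c))) (Nr (pmod2 (a+b+c))) 0"
    unfolding psit_def s1 s2 shift_mod shift_div k2 using V2 G by simp
qed



definition Rr :: "nat \<Rightarrow> mono" where "Rr i = [(0,0),(0,1),(1,0),(1,1)] ! i"

lemma sum4: fixes g :: "nat \<Rightarrow> complex" shows "(\<Sum>i<4. g i) = g 0 + g 1 + g 2 + g 3"
  by (simp add: eval_nat_numeral)

lemma sumR: "(\<Sum>i<4. F (Rr i) * (if pmod2 u = Rr i then 1 else 0)) = (F (pmod2 u) :: complex)"
  using pmod2_cases[of u] unfolding sum4 by (auto simp: Rr_def)

lemma sumC: "j < 4 \<Longrightarrow> (\<Sum>i<4. c i * (if pmod2 (Rr j) = Rr i then 1 else 0)) = (c j :: complex)"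
  unfolding sum4 by (auto simp: Rr_def pmod2_def less_Suc_eq eval_nat_numeral)

definition zz :: "real \<Rightarrow> nat \<Rightarrow> cochain" where
  "zz \<theta> i xs = (if length xs = 3 \<and> pmod2 (sum_list xs) = Rr i then 1 / Q \<theta> xs else 0)"

lemma Qzz: "Q \<theta> [a,b,c] * zz \<theta> i [a,b,c] = (if pmod2 (a+b+c) = Rr i then 1 else 0)"
  by (simp add: zz_def add.assoc)

lemma zz_len: "length xs \<noteq> 3 \<Longrightarrow> zz \<theta> i xs = 0" by (simp add: zz_def)

lemma pm1: "pmod2 (-c + a + b) = pmod2 (a + b + c)"
proof -
  have e: "-c + a + b = (a+b+c) - (c+c)" by (simp add: algebra_simps)
  show ?thesis by (subst e) (rule shift_mod)
qed

lemma pm1': "pmod2 (a + b - c) = pmod2 (a + (b + c))"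
proof -
  have e: "a + b - c = (a+(b+c)) - (c+c)" by (simp add: algebra_simps)
  show ?thesis by (subst e) (rule shift_mod)
qed

lemma len2: "length xs = 2 \<Longrightarrow> \<exists>a b. xs = [a,b]"
  by (cases xs; cases "tl xs"; auto)
lemma len3: "length xs = 3 \<Longrightarrow> \<exists>a b c. xs = [a,b,c]"
  by (cases xs; cases "tl xs"; cases "tl (tl xs)"; auto simp: numeral_3_eq_3)
lemma len4: "length xs = 4 \<Longrightarrow> \<exists>a b c d. xs = [a,b,c,d]"
  by (cases xs; cases "tl xs"; cases "tl (tl xs)"; cases "tl (tl (tl xs))"; auto simp: eval_nat_numeral)
lemma len1: "length xs = 1 \<Longrightarrow> \<exists>a. xs = [a]"
  by (cases xs; auto)

lemma zz_cyc: "zz \<theta> i \<in> cyc_cocycles \<theta> 2"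
proof -
  have cc: "zz \<theta> i \<in> cyc_cochains 2"
    unfolding cyc_cochains_def cochains_def
  proof (intro CollectI conjI allI impI)
    fix xs :: "mono list" assume "length xs \<noteq> 2 + 1" then show "zz \<theta> i xs = 0" by (simp add: zz_def)
  next
    fix xs :: "mono list" assume "length xs = 2 + 1"
    then have l: "length xs = 3" by simp
    from len3[OF l] obtain a b c where xs: "xs = [a,b,c]" by blast
    have "zz \<theta> i [-c,a,b] = zz \<theta> i [a,b,c]"
      using pm1'[of a b c] QL2[of \<theta> c a b] by (simp add: zz_def add.assoc)
    then show "tw_lambda 2 (zz \<theta> i) xs = zz \<theta> i xs" by (simp add: xs L2)
  qed
  have "tw_b \<theta> 2 (zz \<theta> i) xs = 0" for xs
  proof (cases "length xs = 4")
    case True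
    from len4[OF True] obtain a b c d where xs: "xs = [a,b,c,d]" by blast
    have s: "a - d + b + c = (a+b+c+d) - (d+d)" by (simp add: algebra_simps)
    have "Q \<theta> xs * tw_b \<theta> 2 (zz \<theta> i) xs = 0"
      unfolding xs T2 Qzz using shift_mod[of "a+b+c+d" d] unfolding s[symmetric]
      by (simp add: algebra_simps)
    then show ?thesis by simp
  next
    case False then show ?thesis by (simp add: tw_b_def)
  qed
  with cc show ?thesis by (simp add: cyc_cocycles_def fun_eq_iff)
qed



lemma HC1: "HC_zero \<theta> 1"
  unfolding HC_zero_def
proof
  fix \<phi> assume h: "\<phi> \<in> cyc_cocycles \<theta> 1"
  have z: "length xs \<noteq> 2 \<Longrightarrow> \<phi> xs = 0" for xs
    using h by (simp add: cyc_cocycles_def cyc_cochains_def cochains_def)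
  have cy: "\<phi> [a,b] = - \<phi> [-b,a]" for a b
    using h L1[of \<phi> a b] by (simp add: cyc_cocycles_def cyc_cochains_def)
  have co: "tw_b \<theta> 1 \<phi> [a,b,c] = 0" for a b c
    using h by (simp add: cyc_cocycles_def fun_eq_iff)
  define f where "f xs = Q \<theta> xs * \<phi> xs" for xs
  have fcy: "f [p,q] = - f [-q,p]" for p q
    unfolding f_def using cy[of p q] QL1[of \<theta> q p] by simp
  have fco: "f [a+b,c] - f [a,b+c] + f [a-c,b] = 0" for a b c
    using T1[of \<theta> a b c \<phi>] co[of a b c] unfolding f_def by simp
  define t where "t z = f [z - pdiv2 z, pdiv2 z]" for z
  define \<tau> where "\<tau> xs = (if length xs = 1 then t (hd xs) / Q \<theta> xs else 0)" for xs
  have \<tau>c: "\<tau> \<in> cyc_cochains 0"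
    unfolding cyc_cochains_def cochains_def
  proof (intro CollectI conjI allI impI)
    fix xs :: "mono list" assume "length xs \<noteq> 0 + 1" then show "\<tau> xs = 0" by (simp add: \<tau>_def)
  next
    fix xs :: "mono list" assume "length xs = 0 + 1"
    then have l: "length xs = 1" by simp
    from len1[OF l] obtain x where xs: "xs = [x]" by blast
    have "t (-x) = t x" unfolding t_def by (rule hc1_tilde(2)[OF fcy fco])
    then show "tw_lambda 0 \<tau> xs = \<tau> xs" by (simp add: xs L0 \<tau>_def QL0)
  qed
  have "\<phi> = tw_b \<theta> 0 \<tau>"
  proof
    fix xs :: "mono list"
    show "\<phi> xs = tw_b \<theta> 0 \<tau> xs"
    proof (cases "length xs = 2")
      case True
      from len2[OF True] obtain x y where xs: "xs = [x,y]" by blast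
      have "Q \<theta> xs * tw_b \<theta> 0 \<tau> xs = t (x+y) - t (x-y)"
        unfolding xs T0 by (simp add: \<tau>_def)
      also have "\<dots> = f [x,y]" unfolding t_def by (rule hc1_tilde(1)[OF fcy fco])
      finally show ?thesis unfolding f_def xs by simp
    next
      case False then show ?thesis using z[OF False] by (simp add: tw_b_def)
    qed
  qed
  then show "\<phi> \<in> cyc_coboundaries \<theta> 1" using \<tau>c by (simp add: cyc_coboundaries_def)
qed

lemma HC2: "HC_dim \<theta> 2 4"
  unfolding HC_dim_def
proof (intro exI[of _ "zz \<theta>"] conjI allI impI ballI)
  fix i :: nat assume "i < 4" show "zz \<theta> i \<in> cyc_cocycles \<theta> 2" by (rule zz_cyc)
next
  fix \<Phi> assume h: "\<Phi> \<in> cyc_cocycles \<theta> 2"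
  have z: "length xs \<noteq> 3 \<Longrightarrow> \<Phi> xs = 0" for xs
    using h by (simp add: cyc_cocycles_def cyc_cochains_def cochains_def)
  have cy: "\<Phi> [a,b,c] = \<Phi> [-c,a,b]" for a b c
    using h L2[of \<Phi> a b c] by (simp add: cyc_cocycles_def cyc_cochains_def)
  have co: "tw_b \<theta> 2 \<Phi> [a,b,c,d] = 0" for a b c d
    using h by (simp add: cyc_cocycles_def fun_eq_iff)
  define P where "P xs = Q \<theta> xs * \<Phi> xs" for xs
  have Pcy: "P [a,b,c] = P [-c,a,b]" for a b c
    unfolding P_def using cy[of a b c] QL2[of \<theta> c a b] by simp
  have Pco: "P [a+b,c,d] - P [a,b+c,d] + P [a,b,c+d] - P [a-d,b,c] = 0" for a b c d
    using T2[of \<theta> a b c d \<Phi>] co[of a b c d] unfolding P_def by simp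
  define cf where "cf i = vc (Gr P (Rr i)) (Nr (Rr i)) 0" for i
  define \<psi> where "\<psi> xs = (if length xs = 2 then psit P (xs!0) (xs!1) / Q \<theta> xs else 0)" for xs
  have \<psi>c: "\<psi> \<in> cyc_cochains 1"
    unfolding cyc_cochains_def cochains_def
  proof (intro CollectI conjI allI impI)
    fix xs :: "mono list" assume "length xs \<noteq> 1 + 1" then show "\<psi> xs = 0" by (simp add: \<psi>_def)
  next
    fix xs :: "mono list" assume "length xs = 1 + 1"
    then have l: "length xs = 2" by simp
    from len2[OF l] obtain a b where xs: "xs = [a,b]" by blast
    show "tw_lambda 1 \<psi> xs = \<psi> xs"
      unfolding xs L1 using hc2_tilde(1)[OF Pcy Pco, of a b] by (simp add: \<psi>_def QL1)
  qed
  have Q\<psi>: "Q \<theta> [p,q] * \<psi> [p,q] = psit P p q" for p q by (simp add: \<psi>_def)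
  have "(\<lambda>xs. \<Phi> xs - (\<Sum>i<4. cf i * zz \<theta> i xs)) = tw_b \<theta> 1 \<psi>"
  proof
    fix xs :: "mono list"
    show "\<Phi> xs - (\<Sum>i<4. cf i * zz \<theta> i xs) = tw_b \<theta> 1 \<psi> xs"
    proof (cases "length xs = 3")
      case True
      from len3[OF True] obtain a b c where xs: "xs = [a,b,c]" by blast
      have "Q \<theta> xs * tw_b \<theta> 1 \<psi> xs = P [a,b,c] - vc (Gr P (pmod2 (a+b+c))) (Nr (pmod2 (a+b+c))) 0"
        unfolding xs T1 Q\<psi> by (rule hc2_tilde(2)[OF Pcy Pco])
      also have "vc (Gr P (pmod2 (a+b+c))) (Nr (pmod2 (a+b+c))) 0
          = (\<Sum>i<4. cf i * (Q \<theta> xs * zz \<theta> i xs))"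
        unfolding xs Qzz cf_def by (rule sumR[symmetric])
      finally have "Q \<theta> xs * tw_b \<theta> 1 \<psi> xs = Q \<theta> xs * (\<Phi> xs - (\<Sum>i<4. cf i * zz \<theta> i xs))"
        by (simp add: P_def xs right_diff_distrib sum_distrib_left mult_ac)
      then show ?thesis by simp
    next
      case False then show ?thesis using z[OF False] zz_len[OF False] by (simp add: tw_b_def)
    qed
  qed
  then show "\<exists>c. (\<lambda>xs. \<Phi> xs - (\<Sum>i<4. c i * zz \<theta> i xs)) \<in> cyc_coboundaries \<theta> 2"
    using \<psi>c by (intro exI[of _ cf]) (simp add: cyc_coboundaries_def)
next
  fix c :: "nat \<Rightarrow> complex" and j :: nat
  assume hc: "(\<lambda>xs. \<Sum>i<4. c i * zz \<theta> i xs) \<in> cyc_coboundaries \<theta> 2" and j: "j < 4"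
  then obtain \<psi> where \<psi>c: "\<psi> \<in> cyc_cochains 1" and eq: "(\<lambda>xs. \<Sum>i<4. c i * zz \<theta> i xs) = tw_b \<theta> 1 \<psi>"
    by (auto simp: cyc_coboundaries_def)
  define p where "p xs = Q \<theta> xs * \<psi> xs" for xs
  have cy: "p [a,b] = - p [-b,a]" for a b
    using \<psi>c L1[of \<psi> a b] QL1[of \<theta> b a] by (simp add: cyc_cochains_def p_def)
  have ev: "(\<Sum>i<4. c i * (if pmod2 (a+b+d) = Rr i then 1 else 0)) = p [a+b,d] - p [a,b+d] + p [a-d,b]" for a b d
  proof -
    have "Q \<theta> [a,b,d] * (\<Sum>i<4. c i * zz \<theta> i [a,b,d]) = Q \<theta> [a,b,d] * tw_b \<theta> 1 \<psi> [a,b,d]"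
      using fun_cong[OF eq, of "[a,b,d]"] by simp
    moreover have "(\<Sum>i<4. c i * (Q \<theta> [a,b,d] * zz \<theta> i [a,b,d])) = (\<Sum>i<4. c i * (if pmod2 (a+b+d) = Rr i then 1 else 0))"
      by (simp only: Qzz)
    ultimately show ?thesis unfolding T1 p_def[symmetric]
        by (simp add: sum_distrib_left mult_ac)
  qed
  let ?r = "Rr j"
  have pr: "pmod2 ?r = ?r" using j by (auto simp: Rr_def pmod2_def less_Suc_eq eval_nat_numeral)
  have e1: "c j = p [?r,0]" using ev[of ?r 0 0] sumC[OF j, of c] by simp
  have e2: "c j = p [0,?r] - p [?r,0] + p [0,-?r]" using ev[of ?r "-?r" ?r] sumC[OF j, of c] by simp
  have "p [0,?r] = - p [?r,0]" using cy[of 0 ?r] cy[of "-?r" 0] cy[of 0 "-?r"] by simp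
  moreover have "p [0,-?r] = - p [?r,0]" using cy[of 0 "-?r"] by simp
  ultimately have "c j = - 3 * p [?r,0]" using e2 by simp
  with e1 show "c j = 0" by simp
qed

theorem mainTheorem11:
  fixes \<theta> :: real
  assumes "\<theta> \<notin> \<rat>"
  shows "HC_zero \<theta> 1 \<and> HC_dim \<theta> 2 4"
  using HC1 HC2 by blast


end
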